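(* For all $n\geq 0$, the bijection $\Psi_n:\mathfrak{S}_n\to\mathcal{PP}(n)$ is an isomorphism of posets when $\mathfrak{S}_n$ is ordered by the weak Bruhat order and $\mathcal{PP}(n)$ by $\leq$: for all $\sigma,\tau\in\mathfrak{S}_n$, $\sigma\leq\tau$ if and only if $\Psi_n(\sigma)\leq\Psi_n(\tau)$.
   Context: A plane poset is a finite set with two partial orders $\leq_h,\leq_r$ such that two distinct elements are $\leq_h$-comparable iff they are not $\leq_r$-comparable; $\mathcal{PP}(n)$ is the set of isomorphism classes of plane posets with $n$ elements. On a plane poset, $x\leq y$ iff ($x\leq_h y$ or $x\leq_r y$) is a total order (known fact). For $P,Q\in\mathcal{PP}(n)$, $\theta_{P,Q}$ is the increasing bijection $P\to Q$ for these total orders, and $P\leq Q$ means: for all $x,y\in P$, $\theta_{P,Q}(x)\leq_h\theta_{P,Q}(y)$ in $Q$ implies $x\leq_h y$ in $P$. For $\sigma\in\mathfrak{S}_n$, $\Psi_n(\sigma)$ is the plane poset on $\{1,\ldots,n\}$ with $a\leq_h b$ iff ($a\leq b$ and $\sigma^{-1}(a)\leq\sigma^{-1}(b)$) and $a\leq_r b$ iff ($a\leq b$ and $\sigma^{-1}(a)\geq\sigma^{-1}(b)$); $\Psi_n$ is known to be a bijection. The weak Bruhat order on $\mathfrak{S}_n$: $\sigma\leq\tau$ iff there is a sequence $\sigma=\sigma_0,\ldots,\sigma_k=\tau$ where each word $\sigma_{p+1}(1)\cdots\sigma_{p+1}(n)$ is obtained from $\sigma_p(1)\cdots\sigma_p(n)$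 by exchanging two consecutive letters $ij$ with $i<j$ (into $ji$). *)

theory Defs
  imports "HOL-Combinatorics.Permutations"
begin

record 'a bipos =
  carrier :: "'a set"
  hle :: "'a \<Rightarrow> 'a \<Rightarrow> bool"
  rle :: "'a \<Rightarrow> 'a \<Rightarrow> bool"

definition partial_order_on' :: "'a set \<Rightarrow> ('a \<Rightarrow> 'a \<Rightarrow> bool) \<Rightarrow> bool" where
  "partial_order_on' A R \<longleftrightarrow>
     (\<forall>x\<in>A. R x x) \<and>
     (\<forall>x\<in>A. \<forall>y\<in>A. R x y \<and> R y x \<longrightarrow> x = y) \<and>
     (\<forall>x\<in>A. \<forall>y\<in>A. \<forall>z\<in>A. R x y \<and> R y z \<longrightarrow> R x z)"

definition plane_poset :: "'a bipos \<Rightarrow> bool" where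
  "plane_poset P \<longleftrightarrow> finite (carrier P) \<and>
     partial_order_on' (carrier P) (hle P) \<and>
     partial_order_on' (carrier P) (rle P) \<and>
     (\<forall>x\<in>carrier P. \<forall>y\<in>carrier P. x \<noteq> y \<longrightarrow>
        ((hle P x y \<or> hle P y x) \<longleftrightarrow> \<not> (rle P x y \<or> rle P y x)))"

definition tle :: "'a bipos \<Rightarrow> 'a \<Rightarrow> 'a \<Rightarrow> bool" where
  "tle P x y \<longleftrightarrow> hle P x y \<or> rle P x y"

definition is_theta :: "'a bipos \<Rightarrow> 'b bipos \<Rightarrow> ('a \<Rightarrow> 'b) \<Rightarrow> bool" where
  "is_theta P Q f \<longleftrightarrow> bij_betw f (carrier P) (carrier Q) \<and>
     (\<forall>x\<in>carrier P. \<forall>y\<in>carrier P. tle P x y \<longrightarrow> tle Q (f x) (f y))"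

definition pp_le :: "'a bipos \<Rightarrow> 'b bipos \<Rightarrow> bool" where
  "pp_le P Q \<longleftrightarrow> (\<exists>f. is_theta P Q f \<and>
     (\<forall>x\<in>carrier P. \<forall>y\<in>carrier P. hle Q (f x) (f y) \<longrightarrow> hle P x y))"

definition Psi :: "nat \<Rightarrow> (nat \<Rightarrow> nat) \<Rightarrow> nat bipos" where
  "Psi n \<sigma> = \<lparr> carrier = {1..n},
      hle = (\<lambda>a b. a \<le> b \<and> inv \<sigma> a \<le> inv \<sigma> b),
      rle = (\<lambda>a b. a \<le> b \<and> inv \<sigma> a \<ge> inv \<sigma> b) \<rparr>"

definition weak_step :: "nat \<Rightarrow> (nat \<Rightarrow> nat) \<Rightarrow> (nat \<Rightarrow> nat) \<Rightarrow> bool" where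
  "weak_step n \<sigma> \<tau> \<longleftrightarrow> (\<exists>p. 1 \<le> p \<and> p < n \<and> \<sigma> p < \<sigma> (Suc p) \<and>
      \<tau> = \<sigma>(p := \<sigma> (Suc p), Suc p := \<sigma> p))"

definition weak_le :: "nat \<Rightarrow> (nat \<Rightarrow> nat) \<Rightarrow> (nat \<Rightarrow> nat) \<Rightarrow> bool" where
  "weak_le n = (weak_step n)\<^sup>*\<^sup>*"

end

theory Submission
  imports Defs
begin

definition invs :: "nat \<Rightarrow> (nat \<Rightarrow> nat) \<Rightarrow> (nat \<times> nat) set" where
  "invs n \<sigma> = {(a,b). a \<in> {1..n} \<and> b \<in> {1..n} \<and> a < b \<and> inv \<sigma> b < inv \<sigma> a}"

lemma invs_sub: "invs n \<sigma> \<subseteq> {1..n} \<times> {1..n}"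
  by (auto simp: invs_def)

lemma finite_invs: "finite (invs n \<sigma>)"
  by (rule finite_subset[OF invs_sub]) auto

lemma mono_bij_id:
  fixes f :: "nat \<Rightarrow> nat"
  assumes b: "bij_betw f {1..n} {1..n}"
    and m: "\<forall>x\<in>{1..n}. \<forall>y\<in>{1..n}. x < y \<longrightarrow> f x < f y"
  shows "x \<in> {1..n} \<Longrightarrow> f x = x"
proof (induction x rule: less_induct)
  case (less x)
  have fx: "f x \<in> {1..n}" using b less.prems by (auto simp: bij_betw_def)
  have inj: "inj_on f {1..n}" using b by (auto simp: bij_betw_def)
  show ?case
  proof (rule ccontr)
    assume ne: "f x \<noteq> x"
    show False
    proof (cases "f x < x")
      case True
      then have "f (f x) = f x" using less.IH fx by blast
      then have "f x = x" using inj fx less.prems by (meson inj_on_eq_iff)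
      then show False using ne by simp
    next
      case False
      then have gt: "x < f x" using ne by simp
      obtain z where z: "z \<in> {1..n}" "f z = x" using b less.prems
        by (metis bij_betw_imp_surj_on imageE)
      consider "z < x" | "z = x" | "x < z" by linarith
      then show False
      proof cases
        case 1 then have "f z = z" using less.IH z by blast
        then show False using z 1 by simp
      next
        case 2 then show False using z ne by simp
      next
        case 3 then have "f x < f z" using m z less.prems by blast
        then show False using z gt by simp
      qed
    qed
  qed
qed

lemma perm_facts:
  assumes "\<sigma> permutes {1..n}"
  shows "\<And>x. \<sigma> (inv \<sigma> x) = x" "\<And>x. inv \<sigma> (\<sigma> x) = x"
    "\<And>x. x \<in> {1..n} \<Longrightarrow> \<sigma> x \<in> {1..n}"
    "\<And>x. x \<in> {1..n} \<Longrightarrow> inv \<sigma> x \<in> {1..n}"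
    "\<And>x y. \<sigma> x = \<sigma> y \<longleftrightarrow> x = y"
    "\<And>x y. inv \<sigma> x = inv \<sigma> y \<longleftrightarrow> x = y"
  subgoal by (rule permutes_inverses[OF assms])
  subgoal by (rule permutes_inverses[OF assms])
  subgoal for x using permutes_in_image[OF assms, of x] by blast
  subgoal for x using permutes_in_image[OF permutes_inv[OF assms], of x] by blast
  subgoal for x y by (rule inj_eq[OF permutes_inj[OF assms]])
  subgoal for x y by (rule inj_eq[OF permutes_inj[OF permutes_inv[OF assms]]])
  done

lemma step_lemma:
  assumes s: "\<sigma> permutes {1..n}" and p: "1 \<le> p" "p < n" and lt: "\<sigma> p < \<sigma> (Suc p)"
  and t: "\<tau> = \<sigma>(p := \<sigma> (Suc p), Suc p := \<sigma> p)"
  shows "\<tau> permutes {1..n} \<and> invs n \<tau> = insert (\<sigma> p, \<sigma> (Suc p)) (invs n \<sigma>)"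
proof -
  let ?t = "Transposition.transpose p (Suc p)"
  have teq: "\<tau> = \<sigma> \<circ> ?t"
    using t by (auto simp: fun_eq_iff Transposition.transpose_def)
  have tp: "?t permutes {1..n}" using p by (intro permutes_swap_id) auto
  have tperm: "\<tau> permutes {1..n}" unfolding teq by (rule permutes_compose[OF tp s])
  have "inv \<tau> = inv ?t \<circ> inv \<sigma>"
    unfolding teq by (rule o_inv_distrib) (auto simp: permutes_bij[OF s])
  then have it: "\<And>x. inv \<tau> x = ?t (inv \<sigma> x)" by simp
  note F = perm_facts[OF s]
  have "invs n \<tau> = insert (\<sigma> p, \<sigma> (Suc p)) (invs n \<sigma>)"
  proof (intro set_eqI iffI)
    fix z assume z: "z \<in> invs n \<tau>"
    obtain a b where ab: "z = (a,b)" by force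
    have H: "a \<in> {1..n}" "b \<in> {1..n}" "a < b" "?t (inv \<sigma> b) < ?t (inv \<sigma> a)"
      using z ab by (auto simp: invs_def it)
    show "z \<in> insert (\<sigma> p, \<sigma> (Suc p)) (invs n \<sigma>)"
    proof (cases "inv \<sigma> b < inv \<sigma> a")
      case True then show ?thesis using H ab by (auto simp: invs_def)
    next
      case False
      have "a \<noteq> b" using H by simp
      then have "inv \<sigma> a \<noteq> inv \<sigma> b" using F by metis
      then have "inv \<sigma> a = p \<and> inv \<sigma> b = Suc p"
        using False H(4) by (auto simp: Transposition.transpose_def split: if_splits)
      then have "a = \<sigma> p" "b = \<sigma> (Suc p)" using F by metis+
      then show ?thesis using ab by simp
    qed
  next
    fix z assume z: "z \<in> insert (\<sigma> p, \<sigma> (Suc p)) (invs n \<sigma>)"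
    show "z \<in> invs n \<tau>"
    proof (cases "z = (\<sigma> p, \<sigma> (Suc p))")
      case True
      have "\<sigma> p \<in> {1..n}" "\<sigma> (Suc p) \<in> {1..n}" using p F by auto
      then show ?thesis using True lt by (auto simp: invs_def it F)
    next
      case False
      then have zi: "z \<in> invs n \<sigma>" using z by simp
      obtain a b where ab: "z = (a,b)" by force
      have H: "a \<in> {1..n}" "b \<in> {1..n}" "a < b" "inv \<sigma> b < inv \<sigma> a"
        using zi ab by (auto simp: invs_def)
      have "\<not> (inv \<sigma> b = p \<and> inv \<sigma> a = Suc p)"
      proof
        assume "inv \<sigma> b = p \<and> inv \<sigma> a = Suc p"
        then have "b = \<sigma> p" "a = \<sigma> (Suc p)" using F by metis+
        then show False using H lt by simp
      qed
      then have "?t (inv \<sigma> b) < ?t (inv \<sigma> a)"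
        using H(4) by (auto simp: Transposition.transpose_def)
      then show ?thesis using H ab by (auto simp: invs_def it)
    qed
  qed
  with tperm show ?thesis by simp
qed

lemma forward:
  assumes "weak_le n \<sigma> \<tau>" "\<sigma> permutes {1..n}"
  shows "\<tau> permutes {1..n} \<and> invs n \<sigma> \<subseteq> invs n \<tau>"
  using assms(1) unfolding weak_le_def
proof (induction rule: rtranclp_induct)
  case base then show ?case using assms(2) by simp
next
  case (step y z)
  then obtain p where "1 \<le> p" "p < n" "y p < y (Suc p)" "z = y(p := y (Suc p), Suc p := y p)"
    by (auto simp: weak_step_def)
  then have "z permutes {1..n} \<and> invs n z = insert (y p, y (Suc p)) (invs n y)"
    using step_lemma[of y n p z] step.IH by blast
  then show ?case using step.IH by blast
qed

lemma key:
  assumes s: "\<sigma> permutes {1..n}" and t: "\<tau> permutes {1..n}"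
    and sub: "invs n \<sigma> \<subseteq> invs n \<tau>" and ab: "(a,b) \<in> invs n \<tau>" "(a,b) \<notin> invs n \<sigma>"
  shows "\<exists>p. 1 \<le> p \<and> p < n \<and> \<sigma> p < \<sigma> (Suc p) \<and> (\<sigma> p, \<sigma> (Suc p)) \<in> invs n \<tau>"
proof (rule ccontr)
  assume nx: "\<not> ?thesis"
  note F = perm_facts[OF s] and G = perm_facts[OF t]
  have H: "a \<in> {1..n}" "b \<in> {1..n}" "a < b" "inv \<tau> b < inv \<tau> a"
    using ab by (auto simp: invs_def)
  define i where "i = inv \<sigma> a"
  define j where "j = inv \<sigma> b"
  have "i \<noteq> j" using H F unfolding i_def j_def by (metis less_irrefl)
  then have ij: "i < j" using ab H unfolding i_def j_def invs_def by auto
  have ir: "1 \<le> i" "j \<le> n" using H F unfolding i_def j_def by auto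
  define q where "q k = inv \<tau> (\<sigma> k)" for k
  have stepq: "q k < q (Suc k)" if k: "i \<le> k" "k < j" for k
  proof -
    have kr: "1 \<le> k" "k < n" using k ir by auto
    have m: "\<sigma> k \<in> {1..n}" "\<sigma> (Suc k) \<in> {1..n}" using kr F by auto
    have ne: "\<sigma> k \<noteq> \<sigma> (Suc k)" using F by simp
    then have qne: "q k \<noteq> q (Suc k)" unfolding q_def using G by metis
    show ?thesis
    proof (cases "\<sigma> k < \<sigma> (Suc k)")
      case True
      then have "(\<sigma> k, \<sigma> (Suc k)) \<notin> invs n \<tau>" using nx kr by blast
      then show ?thesis using m True qne unfolding invs_def q_def by auto
    next
      case False
      then have lt: "\<sigma> (Suc k) < \<sigma> k" using ne by simp
      have "(\<sigma> (Suc k), \<sigma> k) \<in> invs n \<sigma>" using m lt F unfolding invs_def by auto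
      then have "(\<sigma> (Suc k), \<sigma> k) \<in> invs n \<tau>" using sub by blast
      then show ?thesis unfolding invs_def q_def by auto
    qed
  qed
  have "\<forall>k. i \<le> k \<longrightarrow> k \<le> j \<longrightarrow> q i + (k - i) \<le> q k"
  proof
    fix k show "i \<le> k \<longrightarrow> k \<le> j \<longrightarrow> q i + (k - i) \<le> q k"
    proof (induction k)
      case 0 then show ?case by simp
    next
      case (Suc k)
      show ?case
      proof (intro impI)
        assume "i \<le> Suc k" "Suc k \<le> j"
        show "q i + (Suc k - i) \<le> q (Suc k)"
        proof (cases "i = Suc k")
          case True then show ?thesis by simp
        next
          case False
          then have "i \<le> k" using \<open>i \<le> Suc k\<close> by simp
          then have "q i + (k - i) \<le> q k" using Suc \<open>Suc k \<le> j\<close> by simp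
          moreover have "q k < q (Suc k)" using stepq \<open>i \<le> k\<close> \<open>Suc k \<le> j\<close> by simp
          ultimately show ?thesis using \<open>i \<le> k\<close> by simp
        qed
      qed
    qed
  qed
  then have "q i + (j - i) \<le> q j" using ij by simp
  then have "q i < q j" using ij by simp
  moreover have "q i = inv \<tau> a" "q j = inv \<tau> b" unfolding q_def i_def j_def using F by auto
  ultimately show False using H by simp
qed

lemma eq_lemma:
  assumes s: "\<sigma> permutes {1..n}" and t: "\<tau> permutes {1..n}" and e: "invs n \<sigma> = invs n \<tau>"
  shows "\<sigma> = \<tau>"
proof -
  note F = perm_facts[OF s] and G = perm_facts[OF t]
  define h where "h = inv \<tau> \<circ> \<sigma>"
  have hp: "h permutes {1..n}" unfolding h_def by (rule permutes_compose[OF s permutes_inv[OF t]])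
  have bh: "bij_betw h {1..n} {1..n}" using permutes_imp_bij[OF hp] .
  have mh: "\<forall>x\<in>{1..n}. \<forall>y\<in>{1..n}. x < y \<longrightarrow> h x < h y"
  proof (intro ballI impI)
    fix x y assume xy: "x \<in> {1..n}" "y \<in> {1..n}" "x < y"
    have m: "\<sigma> x \<in> {1..n}" "\<sigma> y \<in> {1..n}" using xy F by auto
    have ne: "\<sigma> x \<noteq> \<sigma> y" using F xy by simp
    then have hne: "inv \<tau> (\<sigma> x) \<noteq> inv \<tau> (\<sigma> y)" using G by metis
    show "h x < h y"
    proof (cases "\<sigma> x < \<sigma> y")
      case True
      then have "(\<sigma> x, \<sigma> y) \<notin> invs n \<sigma>" using F xy unfolding invs_def by auto
      then have "(\<sigma> x, \<sigma> y) \<notin> invs n \<tau>" using e by simp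
      then show ?thesis using True m hne unfolding invs_def h_def by auto
    next
      case False
      then have lt: "\<sigma> y < \<sigma> x" using ne by simp
      then have "(\<sigma> y, \<sigma> x) \<in> invs n \<sigma>" using F xy m unfolding invs_def by auto
      then have "(\<sigma> y, \<sigma> x) \<in> invs n \<tau>" using e by simp
      then show ?thesis unfolding invs_def h_def by auto
    qed
  qed
  show ?thesis
  proof (rule ext)
    fix x show "\<sigma> x = \<tau> x"
    proof (cases "x \<in> {1..n}")
      case True
      then have "h x = x" using mono_bij_id[OF bh mh] by blast
      then have "\<tau> (inv \<tau> (\<sigma> x)) = \<tau> x" unfolding h_def by simp
      then show ?thesis using G by simp
    next
      case False then show ?thesis using permutes_not_in[OF s] permutes_not_in[OF t] by simp
    qed
  qed
qed

lemma backward: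
  assumes t: "\<tau> permutes {1..n}"
  shows "\<sigma> permutes {1..n} \<Longrightarrow> invs n \<sigma> \<subseteq> invs n \<tau> \<Longrightarrow> weak_le n \<sigma> \<tau>"
proof (induction "card (invs n \<tau> - invs n \<sigma>)" arbitrary: \<sigma> rule: less_induct)
  case less
  show ?case
  proof (cases "invs n \<sigma> = invs n \<tau>")
    case True
    then have "\<sigma> = \<tau>" using eq_lemma less.prems t by blast
    then show ?thesis unfolding weak_le_def by simp
  next
    case False
    then obtain a b where ab: "(a,b) \<in> invs n \<tau>" "(a,b) \<notin> invs n \<sigma>" using less.prems by auto
    obtain p where p: "1 \<le> p" "p < n" "\<sigma> p < \<sigma> (Suc p)" "(\<sigma> p, \<sigma> (Suc p)) \<in> invs n \<tau>"
      using key[OF less.prems(1) t less.prems(2) ab] by blast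
    define \<sigma>' where "\<sigma>' = \<sigma>(p := \<sigma> (Suc p), Suc p := \<sigma> p)"
    have st: "\<sigma>' permutes {1..n} \<and> invs n \<sigma>' = insert (\<sigma> p, \<sigma> (Suc p)) (invs n \<sigma>)"
      using step_lemma[OF less.prems(1) p(1,2,3) \<sigma>'_def] .
    have notin: "(\<sigma> p, \<sigma> (Suc p)) \<notin> invs n \<sigma>"
      using perm_facts[OF less.prems(1)] unfolding invs_def by auto
    have sub': "invs n \<sigma>' \<subseteq> invs n \<tau>" using st p(4) less.prems(2) by auto
    have "invs n \<tau> - invs n \<sigma>' = (invs n \<tau> - invs n \<sigma>) - {(\<sigma> p, \<sigma> (Suc p))}"
      using st by auto
    then have "card (invs n \<tau> - invs n \<sigma>') < card (invs n \<tau> - invs n \<sigma>)"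
      using p(4) notin finite_invs
      by (metis DiffI card_Diff1_less finite_Diff)
    then have "weak_le n \<sigma>' \<tau>" using less.hyps st sub' by blast
    moreover have "weak_step n \<sigma> \<sigma>'" unfolding weak_step_def \<sigma>'_def using p by blast
    ultimately show ?thesis unfolding weak_le_def
      by (meson converse_rtranclp_into_rtranclp)
  qed
qed

lemma carrier_Psi[simp]: "carrier (Psi n \<sigma>) = {1..n}"
  by (simp add: Psi_def)

lemma hle_Psi: "hle (Psi n \<sigma>) a b \<longleftrightarrow> a \<le> b \<and> inv \<sigma> a \<le> inv \<sigma> b"
  by (simp add: Psi_def)

lemma tle_Psi: "tle (Psi n \<sigma>) x y \<longleftrightarrow> x \<le> y"
  by (auto simp: tle_def Psi_def)

theorem theorem15:
  fixes n :: nat and \<sigma> \<tau> :: "nat \<Rightarrow> nat"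
  assumes "\<sigma> permutes {1..n}" and "\<tau> permutes {1..n}"
  shows "weak_le n \<sigma> \<tau> \<longleftrightarrow> pp_le (Psi n \<sigma>) (Psi n \<tau>)"
proof
  assume "weak_le n \<sigma> \<tau>"
  then have sub: "invs n \<sigma> \<subseteq> invs n \<tau>" using forward assms by blast
  note G = perm_facts[OF assms(2)]
  have "is_theta (Psi n \<sigma>) (Psi n \<tau>) id"
    unfolding is_theta_def by (simp add: tle_Psi)
  moreover have "\<forall>x\<in>{1..n}. \<forall>y\<in>{1..n}. hle (Psi n \<tau>) x y \<longrightarrow> hle (Psi n \<sigma>) x y"
  proof (intro ballI impI)
    fix x y assume xy: "x \<in> {1..n}" "y \<in> {1..n}" "hle (Psi n \<tau>) x y"
    then have h: "x \<le> y" "inv \<tau> x \<le> inv \<tau> y" by (auto simp: hle_Psi)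
    show "hle (Psi n \<sigma>) x y"
    proof (cases "x = y")
      case True then show ?thesis by (simp add: hle_Psi)
    next
      case False
      then have "(x,y) \<notin> invs n \<tau>" using h unfolding invs_def by auto
      then have "(x,y) \<notin> invs n \<sigma>" using sub by blast
      then show ?thesis using xy h False unfolding invs_def hle_Psi by auto
    qed
  qed
  ultimately show "pp_le (Psi n \<sigma>) (Psi n \<tau>)" unfolding pp_le_def carrier_Psi id_apply
    by blast
next
  assume "pp_le (Psi n \<sigma>) (Psi n \<tau>)"
  then obtain f where th: "is_theta (Psi n \<sigma>) (Psi n \<tau>) f"
    and hf: "\<forall>x\<in>{1..n}. \<forall>y\<in>{1..n}. hle (Psi n \<tau>) (f x) (f y) \<longrightarrow> hle (Psi n \<sigma>) x y"
    unfolding pp_le_def carrier_Psi by blast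
  have bf: "bij_betw f {1..n} {1..n}" using th unfolding is_theta_def by (simp add: hle_Psi)
  have mf: "\<forall>x\<in>{1..n}. \<forall>y\<in>{1..n}. x < y \<longrightarrow> f x < f y"
  proof (intro ballI impI)
    fix x y assume xy: "x \<in> {1..n}" "y \<in> {1..n}" "x < y"
    have "f x \<le> f y" using th xy unfolding is_theta_def by (auto simp: tle_Psi hle_Psi)
    moreover have "f x \<noteq> f y" using bf xy by (metis bij_betw_imp_inj_on inj_on_eq_iff less_irrefl)
    ultimately show "f x < f y" by simp
  qed
  have fid: "\<And>x. x \<in> {1..n} \<Longrightarrow> f x = x" using mono_bij_id[OF bf mf] by blast
  have "invs n \<sigma> \<subseteq> invs n \<tau>"
  proof
    fix z assume z: "z \<in> invs n \<sigma>"
    obtain a b where ab: "z = (a,b)" by force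
    have H: "a \<in> {1..n}" "b \<in> {1..n}" "a < b" "inv \<sigma> b < inv \<sigma> a"
      using z ab by (auto simp: invs_def)
    have "\<not> hle (Psi n \<sigma>) a b" using H by (auto simp: hle_Psi)
    then have "\<not> hle (Psi n \<tau>) a b" using hf H fid by metis
    then show "z \<in> invs n \<tau>" using H ab by (auto simp: hle_Psi invs_def)
  qed
  then show "weak_le n \<sigma> \<tau>" using backward assms by blast
qed

end
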